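(* If $L$ is a finite dimensional representation of $Y^{[p]}$, then the subspace $L^0=\{v\in L : e^{(r)}.v=0 \text{ for all } r>0\}$ is non-zero.
   Context: Let $k$ be an algebraically closed field of characteristic $p>2$, parities $|1|=0$, $|2|=1$. $Y=Y_{1|1}$ is the superalgebra over $k$ with generators $t_{i,j}^{(r)}$ ($1\le i,j\le2$, $r>0$, parity $|i|+|j|$) and relations $[t_{i,j}^{(r)},t_{k,l}^{(s)}]=(-1)^{|i||j|+|i||k|+|j||k|}\sum_{t=0}^{\min(r,s)-1}(t_{k,j}^{(t)}t_{i,l}^{(r+s-1-t)}-t_{k,j}^{(r+s-1-t)}t_{i,l}^{(t)})$, $t_{i,j}^{(0)}=\delta_{ij}$; $t_{i,j}(u)=\sum_{r\ge0}t_{i,j}^{(r)}u^{-r}$. The elements $d_i^{(r)},e^{(r)},f^{(r)}$ are the coefficients of $d_i(u)$, $e(u)=\sum_{r>0}e^{(r)}u^{-r}$, $f(u)$ defined by $t_{1,1}=d_1$, $t_{1,2}=d_1e$, $t_{2,1}=fd_1$, $t_{2,2}=fd_1e+d_2$. Let $b_1(u)=d_1(u)d_1(u-1)\cdots d_1(u-p+1)$, $b_2(u)=d_2(u)^{-1}\cdots d_2(u-p+1)^{-1}$ with coefficients $b_i^{(r)}$; the $b_i^{(rp)}$ are central and $Y^{[p]}=Y/YZ_p(Y)_+$, where $Z_p(Y)_+$ is the ideal generated by the $b_i^{(rp)}$ ($i=1,2,r>0$) in the subalgebra they generate. Images in $Y^{[p]}$ keep the same names. *)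

theory Defs
  imports "HOL-Analysis.Analysis" "HOL-Computational_Algebra.Polynomial"
begin

definition alg_closed :: "'k::field itself \<Rightarrow> bool" where
  "alg_closed _ \<longleftrightarrow> (\<forall>q :: 'k poly. degree q > 0 \<longrightarrow> (\<exists>x. poly q x = 0))"

text \<open>Formal series in u^{-1} with (square) matrix coefficients over k,
  represented by their coefficient sequence: A r is the coefficient of u^{-r}.\<close>
type_synonym ('k,'n) mser = "nat \<Rightarrow> 'k^'n^'n"

definition sone :: "('k::field,'n::finite) mser" where
  "sone r = (if r = 0 then mat 1 else 0)"

definition smul :: "('k::field,'n::finite) mser \<Rightarrow> ('k,'n) mser \<Rightarrow> ('k,'n) mser" where
  "smul A B r = (\<Sum>s\<le>r. A s ** B (r - s))"

primrec spow :: "('k::field,'n::finite) mser \<Rightarrow> nat \<Rightarrow> ('k,'n) mser" where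
  "spow A 0 = sone"
| "spow A (Suc m) = smul A (spow A m)"

text \<open>Inverse of a series with constant term 1: (1 - N)^{-1} = sum of N^m, N = 1 - A.\<close>
definition sinv :: "('k::field,'n::finite) mser \<Rightarrow> ('k,'n) mser" where
  "sinv A r = (\<Sum>m\<le>r. spow (\<lambda>s. sone s - A s) m r)"

text \<open>Shift: given A(u) = sum_r A r u^{-r}, the coefficients of A(u - a), using
  (u-a)^{-r} = sum_m (r+m-1 choose m) a^m u^{-r-m}.\<close>
definition sshift :: "'k::field \<Rightarrow> ('k,'n::finite) mser \<Rightarrow> ('k,'n) mser" where
  "sshift a A q = (if q = 0 then A 0
     else (\<Sum>r\<in>{1..q}. mat (of_nat ((q - 1) choose (q - r)) * a ^ (q - r)) ** A r))"

definition ipar :: "nat \<Rightarrow> nat" where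
  "ipar i = (if i = 2 then 1 else 0)"

text \<open>t_{ij}^{(r)} including t_{ij}^{(0)} = delta_{ij}; T gives the action of the
  generators t_{ij}^{(r)}, r > 0, as matrices.\<close>
definition tser :: "(nat \<Rightarrow> nat \<Rightarrow> nat \<Rightarrow> 'k^'n^'n) \<Rightarrow> nat \<Rightarrow> nat \<Rightarrow> ('k::field,'n::finite) mser" where
  "tser T i j r = (if r = 0 then (if i = j then mat 1 else 0) else T i j r)"

text \<open>The RTT (super)commutator relations of Y_{1|1}, r, s > 0.\<close>
definition yangian_rels :: "(nat \<Rightarrow> nat \<Rightarrow> nat \<Rightarrow> 'k::field^'n::finite^'n) \<Rightarrow> bool" where
  "yangian_rels T \<longleftrightarrow>
    (\<forall>i\<in>{1,2}. \<forall>j\<in>{1,2}. \<forall>k\<in>{1,2}. \<forall>l\<in>{1,2}. \<forall>r>0. \<forall>s>0.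
       T i j r ** T k l s
         - mat ((-1) ^ ((ipar i + ipar j) * (ipar k + ipar l))) ** (T k l s ** T i j r)
       = mat ((-1) ^ (ipar i * ipar j + ipar i * ipar k + ipar j * ipar k)) **
         (\<Sum>t<min r s. tser T k j t ** tser T i l (r + s - 1 - t)
                      - tser T k j (r + s - 1 - t) ** tser T i l t))"

text \<open>Super structure: the module k^n is graded by a parity of the basis vectors,
  and t_{ij}^{(r)} acts by an operator of parity |i|+|j|.\<close>
definition graded_action :: "('n::finite \<Rightarrow> nat) \<Rightarrow> (nat \<Rightarrow> nat \<Rightarrow> nat \<Rightarrow> 'k::field^'n^'n) \<Rightarrow> bool" where
  "graded_action par T \<longleftrightarrow>
    (\<forall>i\<in>{1,2}. \<forall>j\<in>{1,2}. \<forall>r>0. \<forall>a b. T i j r $ a $ b \<noteq> 0 \<longrightarrow>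
        (par a + par b) mod 2 = (ipar i + ipar j) mod 2)"

definition d1ser where "d1ser T = tser T 1 1"
definition eser where "eser T = smul (sinv (d1ser T)) (tser T 1 2)"
definition fser where "fser T = smul (tser T 2 1) (sinv (d1ser T))"
definition d2ser where
  "d2ser T = (\<lambda>r. tser T 2 2 r - smul (smul (fser T) (d1ser T)) (eser T) r)"

text \<open>b_1(u) = d_1(u) d_1(u-1) ... d_1(u-p+1), b_2(u) = d_2(u)^{-1} ... d_2(u-p+1)^{-1}.\<close>
definition b1ser :: "nat \<Rightarrow> (nat \<Rightarrow> nat \<Rightarrow> nat \<Rightarrow> 'k::field^'n::finite^'n) \<Rightarrow> ('k,'n) mser" where
  "b1ser p T = foldr (\<lambda>j acc. smul (sshift (of_nat j) (d1ser T)) acc) [0..<p] sone"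
definition b2ser :: "nat \<Rightarrow> (nat \<Rightarrow> nat \<Rightarrow> nat \<Rightarrow> 'k::field^'n::finite^'n) \<Rightarrow> ('k,'n) mser" where
  "b2ser p T = foldr (\<lambda>j acc. smul (sinv (sshift (of_nat j) (d2ser T))) acc) [0..<p] sone"

text \<open>A finite-dimensional representation of Y^{[p]} on k^n (n = CARD('n)): a graded
  representation of Y_{1|1} on which all b_i^{(rp)}, r > 0, act by zero.\<close>
definition Yp_rep :: "nat \<Rightarrow> ('n::finite \<Rightarrow> nat) \<Rightarrow> (nat \<Rightarrow> nat \<Rightarrow> nat \<Rightarrow> 'k::field^'n^'n) \<Rightarrow> bool" where
  "Yp_rep p par T \<longleftrightarrow> yangian_rels T \<and> graded_action par T \<and>
     (\<forall>r>0. b1ser p T (r * p) = 0 \<and> b2ser p T (r * p) = 0)"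

end

theory Submission
  imports Defs
begin

lemma mv_diff: "((A::'a::ring_1^'n^'m) - B) *v x = A *v x - B *v x"
  by (simp add: vec_eq_iff matrix_vector_mult_def sum_subtractf left_diff_distrib)

lemma mv_add: "((A::'a::ring_1^'n^'m) + B) *v x = A *v x + B *v x"
  by (simp add: vec_eq_iff matrix_vector_mult_def sum.distrib distrib_right)

lemma mv_sum: "finite S \<Longrightarrow> (sum f S) *v (x::'a::ring_1^'n) = (\<Sum>t\<in>S. f t *v x)"
  by (induction S rule: finite_induct) (auto simp: mv_add)

lemma mv_mat: "mat c *v (x::'a::comm_ring_1^'n) = c *s x"
proof -
  have "\<And>i. (\<Sum>j\<in>UNIV. (if i = j then c else 0) * x $ j) = c * x $ i"
    by (simp add: if_distrib[where f="\<lambda>a. a * _"] cong: if_cong)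
  then show ?thesis by (simp add: vec_eq_iff matrix_vector_mult_def mat_def)
qed

lemma mv_mm: "(A ** B) *v x = A *v (B *v x)"
  by (simp add: matrix_vector_mul_assoc)

locale xrel =
  fixes X :: "nat \<Rightarrow> 'k::field^'n::finite^'n"
  assumes X0: "X 0 = 0"
    and rel: "\<And>r s v. 0 < r \<Longrightarrow> 0 < s \<Longrightarrow> X r *v (X s *v v) + X s *v (X r *v v) =
       (\<Sum>t<min r s. X t *v (X (r + s - 1 - t) *v v) - X (r + s - 1 - t) *v (X t *v v))"
    and two: "(2::'k) \<noteq> 0"
begin

definition K :: "nat \<Rightarrow> ('k^'n) set" where
  "K m = {v. \<forall>r\<le>m. X r *v v = 0}"

lemma inv: assumes "v \<in> K m" shows "s \<le> m \<Longrightarrow> X s *v (X r *v v) = 0"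
proof (induction s arbitrary: r rule: less_induct)
  case (less s)
  show ?case
  proof (cases "s = 0 \<or> r = 0")
    case True then show ?thesis using X0 by auto
  next
    case False
    have vs: "X s *v v = 0" using assms less.prems by (auto simp: K_def)
    have "(\<Sum>t<min r s. X t *v (X (r + s - 1 - t) *v v) - X (r + s - 1 - t) *v (X t *v v)) = 0"
    proof (rule sum.neutral, rule ballI)
      fix t assume t: "t \<in> {..<min r s}"
      then have "X t *v (X (r + s - 1 - t) *v v) = 0" using less by auto
      moreover have "X t *v v = 0" using t less.prems assms by (auto simp: K_def)
      ultimately show "X t *v (X (r + s - 1 - t) *v v) - X (r + s - 1 - t) *v (X t *v v) = 0" by simp
    qed
    with rel[of r s v] False vs show ?thesis by simp
  qed
qed

lemma sq: assumes "v \<in> K m" shows "X (Suc m) *v (X (Suc m) *v v) = 0"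
proof -
  let ?w = "X (Suc m) *v (X (Suc m) *v v)"
  have "(\<Sum>t<min (Suc m) (Suc m). X t *v (X (Suc m + Suc m - 1 - t) *v v) - X (Suc m + Suc m - 1 - t) *v (X t *v v)) = 0"
  proof (rule sum.neutral, rule ballI)
    fix t assume t: "t \<in> {..<min (Suc m) (Suc m)}"
    then have "X t *v (X (Suc m + Suc m - 1 - t) *v v) = 0" using inv[OF assms] by auto
    moreover have "X t *v v = 0" using t assms by (auto simp: K_def)
    ultimately show "X t *v (X (Suc m + Suc m - 1 - t) *v v) - X (Suc m + Suc m - 1 - t) *v (X t *v v) = 0" by simp
  qed
  note r = rel[of "Suc m" "Suc m" v]
  have "?w + ?w = 0" using r \<open>(\<Sum>t<_. _) = 0\<close> by (simp only:)
  then have "\<And>i. ?w $ i + ?w $ i = 0" by (metis vector_add_component zero_index)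
  then have "\<And>i. 2 * ?w $ i = 0" by (simp only: mult_2)
  with two have "\<And>i. ?w $ i = 0" by simp
  then show ?thesis by (simp add: vec_eq_iff)
qed

lemma nonzero: "\<exists>v\<in>K m. v \<noteq> 0"
proof (induction m)
  case 0
  have "(\<chi> i. (1::'k)) \<noteq> 0" by (simp add: vec_eq_iff)
  then show ?case using X0 by (auto simp: K_def)
next
  case (Suc m)
  then obtain v where v: "v \<in> K m" "v \<noteq> 0" by auto
  show ?case
  proof (cases "X (Suc m) *v v = 0")
    case True
    then have "v \<in> K (Suc m)" using v by (auto simp: K_def le_Suc_eq)
    then show ?thesis using v by auto
  next
    case False
    have "X (Suc m) *v v \<in> K (Suc m)"
      using inv[OF v(1)] sq[OF v(1)] by (auto simp: K_def le_Suc_eq)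
    then show ?thesis using False by auto
  qed
qed

lemma mv_scale: "(A::'k^'n^'n) *v (c *s x) = c *s (A *v x)"
  by (simp add: vec_eq_iff matrix_vector_mult_def sum_distrib_left mult.left_commute)

lemma K_sub: "vec.subspace (K m)"
  unfolding vec.subspace_def K_def
  by (simp add: matrix_vector_right_distrib mv_scale)

lemma K_mono: "m \<le> m' \<Longrightarrow> K m' \<subseteq> K m"
  by (auto simp: K_def)

lemma common: "\<exists>v. v \<noteq> 0 \<and> (\<forall>r. X r *v v = 0)"
proof -
  obtain m where m: "\<And>j. vec.dim (K m) \<le> vec.dim (K j)"
    using ex_has_least_nat[of "\<lambda>_. True" 0 "\<lambda>j. vec.dim (K j)"] by auto
  have eq: "K (max m r) = K m" for r
    using vec.subspace_dim_equal[OF K_sub K_sub K_mono[of m "max m r"]] m by auto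
  obtain v where v: "v \<in> K m" "v \<noteq> 0" using nonzero by auto
  have "X r *v v = 0" for r
  proof -
    have "v \<in> K (max m r)" using v(1) eq[of r] by simp
    then show ?thesis by (simp add: K_def)
  qed
  then show ?thesis using v by auto
qed

end

theorem lemma3p4:
  fixes p :: nat
    and par :: "'n::finite \<Rightarrow> nat"
    and T :: "nat \<Rightarrow> nat \<Rightarrow> nat \<Rightarrow> 'k::field^'n^'n"
  assumes "alg_closed TYPE('k)"
    and "CHAR('k) = p" and "prime p" and "p > 2"
    and "Yp_rep p par T"
  shows "\<exists>v :: 'k^'n. v \<noteq> 0 \<and> (\<forall>r>0. eser T r *v v = 0)"
proof -
  have two: "(2::'k) \<noteq> 0"
  proof
    assume "(2::'k) = 0"
    then have "of_nat 2 = (0::'k)" by simp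
    then have "p dvd 2" using assms(2) of_nat_eq_0_iff_char_dvd by metis
    with assms(4) show False using nat_dvd_not_less by auto
  qed
  have yr: "yangian_rels T" using assms(5) by (simp add: Yp_rep_def)
  interpret xrel "tser T 1 2"
  proof
    show "tser T 1 2 0 = 0" by (simp add: tser_def)
    show "(2::'k) \<noteq> 0" by (rule two)
    fix r s :: nat and v :: "'k^'n" assume rs: "0 < r" "0 < s"
    have "T 1 2 r ** T 1 2 s - mat ((-1) ^ ((ipar 1 + ipar 2) * (ipar 1 + ipar 2))) ** (T 1 2 s ** T 1 2 r)
       = mat ((-1) ^ (ipar 1 * ipar 2 + ipar 1 * ipar 1 + ipar 2 * ipar 1)) **
         (\<Sum>t<min r s. tser T 1 2 t ** tser T 1 2 (r + s - 1 - t)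
                      - tser T 1 2 (r + s - 1 - t) ** tser T 1 2 t)"
      using yr rs unfolding yangian_rels_def by blast
    then have "(T 1 2 r ** T 1 2 s - mat (-1) ** (T 1 2 s ** T 1 2 r)) *v v
       = (mat 1 ** (\<Sum>t<min r s. tser T 1 2 t ** tser T 1 2 (r + s - 1 - t)
                      - tser T 1 2 (r + s - 1 - t) ** tser T 1 2 t)) *v v"
      by (simp add: ipar_def)
    moreover have "tser T 1 2 r = T 1 2 r" "tser T 1 2 s = T 1 2 s" using rs by (auto simp: tser_def)
    ultimately show "tser T 1 2 r *v (tser T 1 2 s *v v) + tser T 1 2 s *v (tser T 1 2 r *v v) =
       (\<Sum>t<min r s. tser T 1 2 t *v (tser T 1 2 (r + s - 1 - t) *v v) - tser T 1 2 (r + s - 1 - t) *v (tser T 1 2 t *v v))"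
      by (simp add: mv_diff mv_mm mv_mat mv_sum)
  qed
  obtain v where v: "v \<noteq> 0" "\<And>r. tser T 1 2 r *v v = 0" using common by auto
  have "eser T r *v v = 0" for r
    unfolding eser_def smul_def
    by (simp only: mv_sum[OF finite_atMost] mv_mm v(2) matrix_vector_mult_0_right sum.neutral_const)
  then show ?thesis using v by auto
qed

end
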